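(* Let $n=2^k$ for some $k\in\mathbb{N}$. Then the path graph on $n$ nodes is reachable (observable) from any single node $i\in\{1,\dots,n\}$, i.e. the pair $(L_n,e_i)$ is reachable (and $(L_n,e_i^T)$ is observable) for every $i$.
   Context: The path graph on nodes $\{1,\dots,n\}$ has edges $\{i,i+1\}$; its Laplacian $L_n$ is tridiagonal with diagonal $(1,2,\dots,2,1)$ and off-diagonal entries $-1$. Reachability of $(L_n,e_i)$ means $[e_i|L_ne_i|\cdots|L_n^{n-1}e_i]$ has rank $n$. *)

theory Defs
  imports "Jordan_Normal_Form.DL_Rank"
begin

(* Laplacian of the path graph on nodes 0..n-1 (0-based; node i of the paper is index i-1).
   Diagonal = degree (1,2,...,2,1), off-diagonal -1 for adjacent nodes. *)
definition path_laplacian :: "nat \<Rightarrow> real mat" where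
  "path_laplacian n = mat n n (\<lambda>(i,j).
     if i = j then (if 0 < i then 1 else 0) + (if i + 1 < n then 1 else 0)
     else if i + 1 = j \<or> j + 1 = i then -1 else 0)"

definition reach_mat :: "real mat \<Rightarrow> real vec \<Rightarrow> real mat" where
  "reach_mat A b = mat (dim_row A) (dim_row A) (\<lambda>(r,c). ((A ^\<^sub>m c) *\<^sub>v b) $ r)"

definition reachable :: "real mat \<Rightarrow> real vec \<Rightarrow> bool" where
  "reachable A b \<longleftrightarrow> vec_space.rank (dim_row A) (reach_mat A b) = dim_row A"

definition obs_mat :: "real mat \<Rightarrow> real vec \<Rightarrow> real mat" where
  "obs_mat A c = mat (dim_row A) (dim_row A) (\<lambda>(r,j). (mat_of_row c * A ^\<^sub>m r) $$ (0, j))"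

definition observable :: "real mat \<Rightarrow> real vec \<Rightarrow> bool" where
  "observable A c \<longleftrightarrow> vec_space.rank (dim_row A) (obs_mat A c) = dim_row A"

end

theory Submission
  imports Defs "HOL-Computational_Algebra.Polynomial"
begin


lemma cos_pair: "cos (y - t) + cos (y + t) = 2 * cos t * cos (y::real)"
  by (simp add: cos_add cos_diff)

lemma sumB:
  fixes n j c :: nat assumes "c < n"
  shows "(\<Sum>m<n. cos (real j * pi / real n * (real m + 1/2)) * path_laplacian n $$ (m,c)) =
     (if 0<c then cos (real j * pi / real n * (real c + 1/2)) - cos (real j * pi / real n * (real (c-1) + 1/2)) else 0)
   + (if c+1<n then cos (real j * pi / real n * (real c + 1/2)) - cos (real j * pi / real n * (real (c+1) + 1/2)) else 0)"
proof -
  define g where "g = (\<lambda>m::nat. cos (real j * pi / real n * (real m + 1/2)))"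
  have pw: "g m * path_laplacian n $$ (m,c) =
     (if m = c then (if 0<c then g c else 0) + (if c+1<n then g c else 0) else 0)
   + (if m = c-1 then (if 0<c then -g(c-1) else 0) else 0)
   + (if m = c+1 then (if c+1<n then -g(c+1) else 0) else 0)" if "m < n" for m
    using that assms by (auto simp: path_laplacian_def)
  have "(\<Sum>m<n. g m * path_laplacian n $$ (m,c)) = (\<Sum>m<n. 
     (if m = c then (if 0<c then g c else 0) + (if c+1<n then g c else 0) else 0)
   + (if m = c-1 then (if 0<c then -g(c-1) else 0) else 0)
   + (if m = c+1 then (if c+1<n then -g(c+1) else 0) else 0))"
    by (rule sum.cong) (auto simp: pw)
  also have "\<dots> = (if 0<c then g c - g (c-1) else 0) + (if c+1<n then g c - g(c+1) else 0)"
    using assms by (simp add: sum.distrib)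
  finally show ?thesis unfolding g_def .
qed



lemma eig_rhs:
  fixes n j c :: nat assumes "c < n" "j < n"
  shows "(if 0<c then cos (real j * pi / real n * (real c + 1/2)) - cos (real j * pi / real n * (real (c-1) + 1/2)) else 0)
   + (if c+1<n then cos (real j * pi / real n * (real c + 1/2)) - cos (real j * pi / real n * (real (c+1) + 1/2)) else 0)
   = (2 - 2 * cos (real j * pi / real n)) * cos (real j * pi / real n * (real c + 1/2))"
proof -
  define t where "t = real j * pi / real n"
  define y where "y = t * (real c + 1/2)"
  have n0: "real n > 0" using assms by simp
  have P: "cos (y - t) + cos (y + t) = 2 * cos t * cos y" by (rule cos_pair)
  have lo: "c > 0 \<Longrightarrow> t * (real (c-1) + 1/2) = y - t" unfolding y_def by (simp add: of_nat_diff algebra_simps)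
  have hi: "t * (real (c+1) + 1/2) = y + t" unfolding y_def by (simp add: algebra_simps)
  have b0: "c = 0 \<Longrightarrow> cos (y - t) = cos y"
  proof -
    assume "c = 0"
    then have "y - t = - y" unfolding y_def by simp
    then show ?thesis by (metis cos_minus)
  qed
  have b1: "c + 1 = n \<Longrightarrow> cos (y + t) = cos y"
  proof -
    assume cn: "c + 1 = n"
    have tn: "t * real n = real j * pi" unfolding t_def using n0 by simp
    have "y + t = real j * pi + t/2" "y = real j * pi - t/2"
      unfolding y_def using tn cn[symmetric] by (simp_all add: algebra_simps)
    moreover have "sin (real j * pi) = 0" by (simp add: sin_zero_iff_int2) 
    ultimately show ?thesis by (simp add: cos_add cos_diff)
  qed
  show ?thesis
    unfolding t_def[symmetric] y_def[symmetric]
    using P lo hi b0 b1 assms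
    by (cases "c = 0"; cases "c + 1 < n") (auto simp: algebra_simps)
qed



definition Vm :: "nat \<Rightarrow> real mat" where
  "Vm n = mat n n (\<lambda>(j,m). cos (real j * pi / real n * (real m + 1/2)))"
definition lam :: "nat \<Rightarrow> nat \<Rightarrow> real" where
  "lam n j = 2 - 2 * cos (real j * pi / real n)"

lemma L_carrier: "path_laplacian n \<in> carrier_mat n n"
  by (simp add: path_laplacian_def)
lemma V_carrier: "Vm n \<in> carrier_mat n n"
  by (simp add: Vm_def)

lemma pow_carrier: "A \<in> carrier_mat n n \<Longrightarrow> A ^\<^sub>m r \<in> carrier_mat n n"
  by (rule carrier_matI) auto

lemma VL: assumes "j < n" "c < n"
  shows "(Vm n * path_laplacian n) $$ (j,c) = lam n j * Vm n $$ (j,c)"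
proof -
  have "(Vm n * path_laplacian n) $$ (j,c) = (\<Sum>m<n. cos (real j * pi / real n * (real m + 1/2)) * path_laplacian n $$ (m,c))"
    using assms L_carrier[of n] V_carrier[of n]
    by (simp add: scalar_prod_def lessThan_atLeast0 Vm_def)
  also have "\<dots> = lam n j * Vm n $$ (j,c)"
    unfolding sumB[OF assms(2)] eig_rhs[OF assms(2,1)] using assms by (simp add: lam_def Vm_def)
  finally show ?thesis .
qed

lemma VLx: assumes "x \<in> carrier_vec n"
  shows "Vm n *\<^sub>v (path_laplacian n *\<^sub>v x) = vec n (\<lambda>j. lam n j * (Vm n *\<^sub>v x) $ j)"
proof -
  have "Vm n *\<^sub>v (path_laplacian n *\<^sub>v x) = (Vm n * path_laplacian n) *\<^sub>v x"
    using assms L_carrier V_carrier by (metis assoc_mult_mat_vec)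
  also have "\<dots> = vec n (\<lambda>j. lam n j * (Vm n *\<^sub>v x) $ j)"
  proof (rule eq_vecI)
    fix j assume j: "j < dim_vec (vec n (\<lambda>j. lam n j * (Vm n *\<^sub>v x) $ j))"
    then have j: "j < n" by simp
    have "((Vm n * path_laplacian n) *\<^sub>v x) $ j = (\<Sum>c<n. (Vm n * path_laplacian n) $$ (j,c) * x $ c)"
      using j assms L_carrier[of n] V_carrier[of n]
      by (simp del: assoc_mult_mat_vec add: scalar_prod_def lessThan_atLeast0 row_def)
    also have "\<dots> = (\<Sum>c<n. lam n j * (Vm n $$ (j,c) * x $ c))"
      using VL[OF j] by (simp add: mult.assoc)
    also have "\<dots> = lam n j * (Vm n *\<^sub>v x) $ j"
      using j assms V_carrier[of n]
      by (simp add: scalar_prod_def lessThan_atLeast0 row_def sum_distrib_left)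
    finally show "((Vm n * path_laplacian n) *\<^sub>v x) $ j = vec n (\<lambda>j. lam n j * (Vm n *\<^sub>v x) $ j) $ j"
      using j by simp
  qed (simp add: Vm_def)
  finally show ?thesis .
qed

lemma VLpow: assumes "x \<in> carrier_vec n"
  shows "Vm n *\<^sub>v (path_laplacian n ^\<^sub>m r *\<^sub>v x) = vec n (\<lambda>j. lam n j ^ r * (Vm n *\<^sub>v x) $ j)"
  using assms
proof (induction r arbitrary: x)
  case 0
  then show ?case using L_carrier[of n] V_carrier[of n]
    by (intro eq_vecI) (auto simp: path_laplacian_def)
next
  case (Suc r)
  have "path_laplacian n ^\<^sub>m Suc r *\<^sub>v x = path_laplacian n ^\<^sub>m r *\<^sub>v (path_laplacian n *\<^sub>v x)"
    using assoc_mult_mat_vec[OF pow_carrier[OF L_carrier[of n], of r] L_carrier[of n] Suc.prems]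
    by simp
  moreover have "path_laplacian n *\<^sub>v x \<in> carrier_vec n" using Suc.prems L_carrier[of n] by simp
  ultimately show ?case using Suc.IH VLx[OF Suc.prems]
    by (intro eq_vecI) (auto simp: Vm_def)
qed



lemma vander:
  fixes l :: "nat \<Rightarrow> real" and x :: "nat \<Rightarrow> real"
  assumes inj: "inj_on l {..<n}" and z: "\<And>j. j<n \<Longrightarrow> (\<Sum>r<n. x r * l j ^ r) = 0"
    and r: "r < n"
  shows "x r = 0"
proof -
  define p where "p = (\<Sum>r<n. monom (x r) r)"
  have ev: "poly p y = (\<Sum>r<n. x r * y ^ r)" for y unfolding p_def by (simp add: poly_sum poly_monom)
  have co: "coeff p r = x r" unfolding p_def using r by (simp add: coeff_sum coeff_monom)
  have dg: "degree p < n" unfolding p_def using r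
    by (intro degree_sum_less) (auto intro: le_less_trans[OF degree_monom_le])
  have "p = 0"
  proof (rule ccontr)
    assume p0: "p \<noteq> 0"
    have "l ` {..<n} \<subseteq> {y. poly p y = 0}" using z ev by auto
    then have "card (l ` {..<n}) \<le> card {y. poly p y = 0}"
      by (rule card_mono[OF poly_roots_finite[OF p0]])
    also have "\<dots> \<le> degree p" by (rule card_poly_roots_bound[OF p0])
    finally show False using card_image[OF inj] dg by simp
  qed
  then show ?thesis using co by simp
qed

lemma lam_inj: "inj_on (lam n) {..<n}"
proof (rule inj_onI)
  fix a b assume a: "a \<in> {..<n}" and b: "b \<in> {..<n}" and e: "lam n a = lam n b"
  have n0: "real n > 0" using a by simp
  have ra: "0 \<le> real a * pi / real n" "real a * pi / real n \<le> pi"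
    using a n0 by (auto simp: field_simps)
  have rb: "0 \<le> real b * pi / real n" "real b * pi / real n \<le> pi"
    using b n0 by (auto simp: field_simps)
  have "cos (real a * pi / real n) = cos (real b * pi / real n)" using e by (simp add: lam_def)
  then have "real a * pi / real n = real b * pi / real n" using cos_inj_pi ra rb by blast
  then show "a = b" using n0 by (simp add: field_simps)
qed

lemma V_nz: assumes n: "n = 2 ^ k" and j: "j < n" and m: "m < n"
  shows "Vm n $$ (j,m) \<noteq> 0"
proof
  assume "Vm n $$ (j,m) = 0"
  then have "cos (real j * pi / real n * (real m + 1/2)) = 0" using j m by (simp add: Vm_def)
  then obtain q :: int where q: "odd q" "real j * pi / real n * (real m + 1/2) = of_int q * (pi/2)"
    using cos_zero_iff_int by blast
  have n0: "real n > 0" using j by simp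
  from q(2) have "pi * (real j * (2 * real m + 1)) = pi * (of_int q * real n)"
    using n0 by (simp add: field_simps)
  then have "real j * (2 * real m + 1) = of_int q * real n"
    using pi_neq_zero mult_left_cancel by blast
  then have "(of_int (int j * (2 * int m + 1)) :: real) = of_int (q * 2 ^ k)"
    using n by simp
  then have eq: "int j * (2 * int m + 1) = q * 2 ^ k"
    using of_int_eq_iff by blast
  have "(2::int) ^ k dvd int j * (2 * int m + 1)" using eq by simp
  moreover have "coprime ((2::int) ^ k) (2 * int m + 1)" by simp
  ultimately have "(2::int) ^ k dvd int j" using coprime_dvd_mult_left_iff by blast
  then have "2 ^ k dvd j" by (metis of_nat_dvd_iff of_nat_numeral of_nat_power)
  then have "j = 0" using j n by (metis dvd_imp_le le_antisym less_imp_le_nat not_less neq0_conv)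
  then have "q = 0" using eq by simp
  then show False using q(1) by simp
qed



lemma K_carrier: "reach_mat (path_laplacian n) b \<in> carrier_mat n n"
  by (simp add: reach_mat_def path_laplacian_def)

lemma K_det: assumes n: "n = 2 ^ k" and i0: "i0 < n"
  shows "det (reach_mat (path_laplacian n) (unit_vec n i0)) \<noteq> 0"
proof
  let ?L = "path_laplacian n" let ?b = "unit_vec n i0 :: real vec"
  let ?K = "reach_mat ?L ?b"
  assume "det ?K = 0"
  then obtain x where x: "x \<in> carrier_vec n" "x \<noteq> 0\<^sub>v n" "?K *\<^sub>v x = 0\<^sub>v n"
    using det_0_iff_vec_prod_zero_field[OF K_carrier] by blast
  have b: "?b \<in> carrier_vec n" by simp
  have colK: "col ?K r = ?L ^\<^sub>m r *\<^sub>v ?b" if "r < n" for r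
    using that L_carrier[of n] pow_carrier[OF L_carrier[of n], of r]
    by (intro eq_vecI) (auto simp: reach_mat_def path_laplacian_def)
  have VK: "(Vm n * ?K) $$ (j,r) = lam n j ^ r * Vm n $$ (j,i0)" if "j < n" "r < n" for j r
  proof -
    have "(Vm n * ?K) $$ (j,r) = row (Vm n) j \<bullet> col ?K r"
      using that V_carrier[of n] K_carrier[of n ?b] by simp
    also have "\<dots> = (Vm n *\<^sub>v (?L ^\<^sub>m r *\<^sub>v ?b)) $ j"
      using that colK V_carrier[of n] by simp
    also have "\<dots> = lam n j ^ r * (Vm n *\<^sub>v ?b) $ j"
      using VLpow[OF b, of r] that by simp
    also have "(Vm n *\<^sub>v ?b) $ j = Vm n $$ (j,i0)"
      using that i0 V_carrier[of n] by (simp add: Vm_def)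
    finally show ?thesis .
  qed
  have z: "(\<Sum>r<n. x $ r * lam n j ^ r) = 0" if j: "j < n" for j
  proof -
    have "0 = (Vm n *\<^sub>v (?K *\<^sub>v x)) $ j" using x j V_carrier[of n] by simp
    also have "\<dots> = ((Vm n * ?K) *\<^sub>v x) $ j"
      using assoc_mult_mat_vec[OF V_carrier[of n] K_carrier[of n ?b] x(1)] by simp
    also have "\<dots> = (\<Sum>r<n. (Vm n * ?K) $$ (j,r) * x $ r)"
      using j x(1) V_carrier[of n] K_carrier[of n ?b]
      by (simp del: assoc_mult_mat_vec add: scalar_prod_def lessThan_atLeast0 row_def)
    also have "\<dots> = (\<Sum>r<n. x $ r * lam n j ^ r) * Vm n $$ (j,i0)"
      using VK j by (simp add: sum_distrib_left mult_ac)
    finally show ?thesis using V_nz[OF n j i0] by simp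
  qed
  have "x = 0\<^sub>v n"
  proof (rule eq_vecI)
    fix r assume "r < dim_vec (0\<^sub>v n :: real vec)"
    then have r: "r < n" by simp
    show "x $ r = 0\<^sub>v n $ r" using vander[OF lam_inj z r] r by simp
  qed (use x in simp)
  then show False using x(2) by simp
qed



lemma L_sym: "transpose_mat (path_laplacian n) = path_laplacian n"
  by (rule eq_matI) (auto simp: path_laplacian_def)

lemma pow_comm: assumes A: "(A :: real mat) \<in> carrier_mat n n"
  shows "A ^\<^sub>m r * A = A * A ^\<^sub>m r"
proof (induction r)
  case 0 then show ?case using A by simp
next
  case (Suc r)
  have "A ^\<^sub>m Suc r * A = (A ^\<^sub>m r * A) * A" by simp
  also have "\<dots> = (A * A ^\<^sub>m r) * A" using Suc by simp
  also have "\<dots> = A * (A ^\<^sub>m r * A)" by (rule assoc_mult_mat[OF A pow_carrier[OF A] A])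
  finally show ?case by simp
qed

lemma pow_sym: assumes A: "(A :: real mat) \<in> carrier_mat n n" and s: "transpose_mat A = A"
  shows "transpose_mat (A ^\<^sub>m r) = A ^\<^sub>m r"
proof (induction r)
  case 0 then show ?case using A by simp
next
  case (Suc r)
  have "transpose_mat (A ^\<^sub>m Suc r) = transpose_mat A * transpose_mat (A ^\<^sub>m r)"
    using transpose_mult[OF pow_carrier[OF A, of r] A] by simp
  also have "\<dots> = A * A ^\<^sub>m r" using Suc s by simp
  also have "\<dots> = A ^\<^sub>m Suc r" using pow_comm[OF A] by simp
  finally show ?case .
qed

lemma obs_eq: assumes b: "b \<in> carrier_vec n"
  shows "obs_mat (path_laplacian n) b = transpose_mat (reach_mat (path_laplacian n) b)"
proof (rule eq_matI)
  fix r j assume r: "r < dim_row (transpose_mat (reach_mat (path_laplacian n) b))"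
    and j: "j < dim_col (transpose_mat (reach_mat (path_laplacian n) b))"
  let ?P = "path_laplacian n ^\<^sub>m r"
  have P: "?P \<in> carrier_mat n n" by (rule pow_carrier[OF L_carrier])
  have rn: "r < n" "j < n" using r j by (auto simp: reach_mat_def path_laplacian_def)
  have "obs_mat (path_laplacian n) b $$ (r,j) = (mat_of_row b * ?P) $$ (0,j)"
    using rn by (simp add: obs_mat_def path_laplacian_def)
  also have "\<dots> = row (mat_of_row b) 0 \<bullet> col ?P j"
    using rn P b by (intro index_mult_mat) (auto simp: mat_of_row_def)
  also have "row (mat_of_row b) 0 = b"
    using b by (intro eq_vecI) (auto simp: mat_of_row_def)
  also have "col ?P j = row (transpose_mat ?P) j" using rn P by (intro eq_vecI) auto
  also have "\<dots> = row ?P j" using pow_sym[OF L_carrier L_sym] by simp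
  also have "b \<bullet> row ?P j = row ?P j \<bullet> b" using b P rn by (intro comm_scalar_prod) auto
  also have "\<dots> = transpose_mat (reach_mat (path_laplacian n) b) $$ (r,j)"
    using rn P by (simp add: reach_mat_def path_laplacian_def)
  finally show "obs_mat (path_laplacian n) b $$ (r,j) = transpose_mat (reach_mat (path_laplacian n) b) $$ (r,j)" .
qed (auto simp: obs_mat_def reach_mat_def)

theorem mainTheorem9:
  fixes k n i :: nat
  assumes "n = 2 ^ k" and "i \<in> {1..n}"
  shows "reachable (path_laplacian n) (unit_vec n (i - 1)) \<and>
         observable (path_laplacian n) (unit_vec n (i - 1))"
proof -
  have i0: "i - 1 < n" using assms(2) by auto
  have d: "det (reach_mat (path_laplacian n) (unit_vec n (i - 1))) \<noteq> 0"
    by (rule K_det[OF assms(1) i0])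
  have dr: "dim_row (path_laplacian n) = n" by (simp add: path_laplacian_def)
  have o: "obs_mat (path_laplacian n) (unit_vec n (i - 1)) \<in> carrier_mat n n"
    by (simp add: obs_mat_def dr)
  have d2: "det (obs_mat (path_laplacian n) (unit_vec n (i - 1))) \<noteq> 0"
    using d det_transpose[OF K_carrier] obs_eq[of "unit_vec n (i - 1)" n] by simp
  show ?thesis
    unfolding reachable_def observable_def dr
    using vec_space.det_rank_iff[OF K_carrier] vec_space.det_rank_iff[OF o] d d2 by simp
qed

end
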